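(* Let $\Delta$ be a local derivation of $\mathcal{S}$ such that $\Delta(L_1)=0$ and $\Delta(G_1)=aG_1$ for some $a\in\mathbb{C}$. Then $\Delta(G_1)=0$.
   Context: $\mathcal{S}$ is the centerless super Virasoro algebra: the Lie superalgebra over $\mathbb{C}$ with basis $\{L_m,G_n: m,n\in\mathbb{Z}\}$, $L_m$ even, $G_n$ odd, and brackets $[L_m,L_n]=(m-n)L_{m+n}$, $[L_m,G_r]=(\frac m2-r)G_{m+r}$, $[G_r,G_s]=2L_{r+s}$. A homogeneous linear map $D$ of parity $|D|$ is a derivation if $D([x,y])=[D(x),y]+(-1)^{|D||x|}[x,D(y)]$ for homogeneous $x,y$; derivations are sums of even and odd ones. A linear map $\Delta:\mathcal{S}\to\mathcal{S}$ is a local derivation if for every $x$ there is a derivation $D_x$ with $\Delta(x)=D_x(x)$. *)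

theory Defs
  imports Complex_Main
begin

text \<open>The centerless super Virasoro algebra S.  An element is a pair (f, g) of
finitely supported coefficient functions: x = sum_m f m * L_m + sum_n g n * G_n.\<close>

type_synonym sv = "(int \<Rightarrow> complex) \<times> (int \<Rightarrow> complex)"

definition supp :: "(int \<Rightarrow> complex) \<Rightarrow> int set" where
  "supp f = {m. f m \<noteq> 0}"

definition SV :: "sv set" where
  "SV = {x. finite (supp (fst x)) \<and> finite (supp (snd x))}"

definition sv_zero :: sv where
  "sv_zero = (\<lambda>_. 0, \<lambda>_. 0)"

definition sv_add :: "sv \<Rightarrow> sv \<Rightarrow> sv" where
  "sv_add x y = (\<lambda>k. fst x k + fst y k, \<lambda>k. snd x k + snd y k)"

definition sv_smult :: "complex \<Rightarrow> sv \<Rightarrow> sv" where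
  "sv_smult c x = (\<lambda>k. c * fst x k, \<lambda>k. c * snd x k)"

definition Lb :: "int \<Rightarrow> sv" where
  "Lb m = (\<lambda>k. if k = m then 1 else 0, \<lambda>_. 0)"

definition Gb :: "int \<Rightarrow> sv" where
  "Gb n = (\<lambda>_. 0, \<lambda>k. if k = n then 1 else 0)"

text \<open>Bilinear extension of [L_m,L_n]=(m-n)L_{m+n}, [L_m,G_r]=(m/2-r)G_{m+r},
[G_r,L_m] = -(m/2-r)G_{m+r}, [G_r,G_s]=2L_{r+s}.\<close>
definition br :: "sv \<Rightarrow> sv \<Rightarrow> sv" where
  "br x y =
    (\<lambda>k. (\<Sum>m\<in>supp (fst x). fst x m * fst y (k - m) * of_int (m - (k - m)))
        + 2 * (\<Sum>r\<in>supp (snd x). snd x r * snd y (k - r)),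
     \<lambda>k. (\<Sum>m\<in>supp (fst x). fst x m * snd y (k - m) * (of_int m / 2 - of_int (k - m)))
        - (\<Sum>m\<in>supp (fst y). fst y m * snd x (k - m) * (of_int m / 2 - of_int (k - m))))"

text \<open>Homogeneity: parity False = even (no G-part), True = odd (no L-part).\<close>
definition homog :: "bool \<Rightarrow> sv \<Rightarrow> bool" where
  "homog q x = (if q then fst x = (\<lambda>_. 0) else snd x = (\<lambda>_. 0))"

definition is_linear :: "(sv \<Rightarrow> sv) \<Rightarrow> bool" where
  "is_linear D \<longleftrightarrow> (\<forall>x\<in>SV. D x \<in> SV)
     \<and> (\<forall>x\<in>SV. \<forall>y\<in>SV. D (sv_add x y) = sv_add (D x) (D y))
     \<and> (\<forall>c. \<forall>x\<in>SV. D (sv_smult c x) = sv_smult c (D x))"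

definition hom_derivation :: "bool \<Rightarrow> (sv \<Rightarrow> sv) \<Rightarrow> bool" where
  "hom_derivation p D \<longleftrightarrow> is_linear D
     \<and> (\<forall>q. \<forall>x\<in>SV. homog q x \<longrightarrow> homog (q \<noteq> p) (D x))
     \<and> (\<forall>q. \<forall>x\<in>SV. \<forall>y\<in>SV. homog q x \<longrightarrow>
          D (br x y) = sv_add (br (D x) y)
                         (sv_smult (if p \<and> q then -1 else 1) (br x (D y))))"

definition derivation :: "(sv \<Rightarrow> sv) \<Rightarrow> bool" where
  "derivation D \<longleftrightarrow> (\<exists>D0 D1. hom_derivation False D0 \<and> hom_derivation True D1
       \<and> (\<forall>x\<in>SV. D x = sv_add (D0 x) (D1 x)))"

definition local_derivation :: "(sv \<Rightarrow> sv) \<Rightarrow> bool" where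
  "local_derivation \<Delta> \<longleftrightarrow> is_linear \<Delta>
     \<and> (\<forall>x\<in>SV. \<exists>D. derivation D \<and> \<Delta> x = D x)"

end

theory Submission imports Defs begin

lemma supp_ind[simp]: "supp (\<lambda>k. if k = m then 1 else 0) = {m}" by (auto simp: supp_def)
lemma supp_zero[simp]: "supp (\<lambda>_. 0) = {}" by (auto simp: supp_def)

lemma sum_supp_single:
  assumes "finite (supp f)" "\<And>m. m \<noteq> a \<Longrightarrow> g m = 0"
  shows "(\<Sum>m\<in>supp f. f m * g m) = f a * g a"
proof (cases "a \<in> supp f")
  case True
  then show ?thesis using assms by (simp add: sum.remove)
next
  case False
  then have "f a = 0" by (simp add: supp_def)
  moreover have "(\<Sum>m\<in>supp f. f m * g m) = 0"
    by (rule sum.neutral) (use False assms in fastforce)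
  ultimately show ?thesis by simp
qed

lemma br_Lr:
  assumes "x \<in> SV"
  shows "fst (br x (Lb n)) k = fst x (k-n) * of_int (k - 2*n)"
    "snd (br x (Lb n)) k = - (snd x (k-n) * (of_int n/2 - of_int (k-n)))"
proof -
  have f: "finite (supp (fst x))" using assms by (simp add: SV_def)
  have "(\<Sum>m\<in>supp (fst x). fst x m * fst (Lb n) (k - m) * of_int (m - (k - m)))
     = (\<Sum>m\<in>supp (fst x). fst x m * (fst (Lb n) (k - m) * of_int (m - (k - m))))"
    by (simp add: mult.assoc)
  also have "\<dots> = fst x (k-n) * (fst (Lb n) (k - (k-n)) * of_int ((k-n) - (k - (k-n))))"
    by (rule sum_supp_single[OF f]) (auto simp: Lb_def)
  finally show "fst (br x (Lb n)) k = fst x (k-n) * of_int (k - 2*n)"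
    by (simp add: br_def Lb_def)
  show "snd (br x (Lb n)) k = - (snd x (k-n) * (of_int n/2 - of_int (k-n)))"
    by (simp add: br_def Lb_def)
qed

lemma br_Gr:
  assumes "x \<in> SV"
  shows "fst (br x (Gb n)) k = 2 * snd x (k-n)"
    "snd (br x (Gb n)) k = fst x (k-n) * (of_int (k-n)/2 - of_int n)"
proof -
  have f: "finite (supp (fst x))" "finite (supp (snd x))" using assms by (auto simp add: SV_def)
  have "(\<Sum>r\<in>supp (snd x). snd x r * snd (Gb n) (k - r)) = snd x (k-n) * snd (Gb n) (k - (k-n))"
    by (rule sum_supp_single[OF f(2)]) (auto simp: Gb_def)
  then show "fst (br x (Gb n)) k = 2 * snd x (k-n)"
    by (simp add: br_def Gb_def)
  have "(\<Sum>m\<in>supp (fst x). fst x m * snd (Gb n) (k - m) * (of_int m / 2 - of_int (k - m)))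
     = (\<Sum>m\<in>supp (fst x). fst x m * (snd (Gb n) (k - m) * (of_int m / 2 - of_int (k - m))))"
    by (simp add: mult.assoc)
  also have "\<dots> = fst x (k-n) * (snd (Gb n) (k - (k-n)) * (of_int (k-n) / 2 - of_int (k - (k-n))))"
    by (rule sum_supp_single[OF f(1)]) (auto simp: Gb_def)
  finally show "snd (br x (Gb n)) k = fst x (k-n) * (of_int (k-n)/2 - of_int n)"
    by (simp add: br_def Gb_def)
qed

lemma br_Ll:
  shows "fst (br (Lb m) y) k = fst y (k-m) * of_int (2*m - k)"
    "snd (br (Lb m) y) k = snd y (k-m) * (of_int m/2 - of_int (k-m))"
  by (simp_all add: br_def Lb_def)

lemma br_Gl:
  assumes "y \<in> SV"
  shows "fst (br (Gb m) y) k = 2 * snd y (k-m)"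
    "snd (br (Gb m) y) k = - (fst y (k-m) * (of_int (k-m)/2 - of_int m))"
proof -
  have f: "finite (supp (fst y))" using assms by (auto simp add: SV_def)
  show "fst (br (Gb m) y) k = 2 * snd y (k-m)" by (simp add: br_def Gb_def)
  have "(\<Sum>j\<in>supp (fst y). fst y j * snd (Gb m) (k - j) * (of_int j / 2 - of_int (k - j)))
     = (\<Sum>j\<in>supp (fst y). fst y j * (snd (Gb m) (k - j) * (of_int j / 2 - of_int (k - j))))"
    by (simp add: mult.assoc)
  also have "\<dots> = fst y (k-m) * (snd (Gb m) (k - (k-m)) * (of_int (k-m) / 2 - of_int (k - (k-m))))"
    by (rule sum_supp_single[OF f]) (auto simp: Gb_def)
  finally show "snd (br (Gb m) y) k = - (fst y (k-m) * (of_int (k-m)/2 - of_int m))"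
    by (simp add: br_def Gb_def)
qed

lemma Lb_SV[simp]: "Lb m \<in> SV" by (simp add: SV_def Lb_def)
lemma Gb_SV[simp]: "Gb m \<in> SV" by (simp add: SV_def Gb_def)
lemma smult_SV[simp]: "x \<in> SV \<Longrightarrow> sv_smult c x \<in> SV"
  unfolding SV_def sv_smult_def
  by (auto elim!: finite_subset[rotated] simp: supp_def)
lemma add_SV[simp]: "x \<in> SV \<Longrightarrow> y \<in> SV \<Longrightarrow> sv_add x y \<in> SV"
proof -
  assume "x \<in> SV" "y \<in> SV"
  then show ?thesis unfolding SV_def sv_add_def
    by (auto intro: finite_subset[of _ "supp (fst x) \<union> supp (fst y)"]
                    finite_subset[of _ "supp (snd x) \<union> supp (snd y)"] simp: supp_def)
qed
lemma homL[simp]: "homog False (Lb m)" by (simp add: homog_def Lb_def)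
lemma homG[simp]: "homog True (Gb m)" by (simp add: homog_def Gb_def)

lemma br_LL: "br (Lb m) (Lb n) = sv_smult (of_int (m-n)) (Lb (m+n))"
  apply (rule prod_eqI; rule ext)
  apply (simp_all only: br_Ll)
  by (auto simp: sv_smult_def Lb_def)
lemma br_LG: "br (Lb m) (Gb n) = sv_smult (of_int m/2 - of_int n) (Gb (m+n))"
  apply (rule prod_eqI; rule ext)
  apply (simp_all only: br_Ll)
  by (auto simp: sv_smult_def Gb_def)
lemma br_GG: "br (Gb m) (Gb n) = sv_smult 2 (Lb (m+n))"
  apply (rule prod_eqI; rule ext)
  apply (simp_all only: br_Gl[OF Gb_SV])
  by (auto simp: sv_smult_def Gb_def Lb_def)

lemma even_der:
  assumes "hom_derivation False D"
  shows "fst (D (Lb 1)) 1 = snd (D (Gb 1)) 1"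
proof -
  have lin: "is_linear D" using assms by (simp add: hom_derivation_def)
  have SVD: "\<And>x. x \<in> SV \<Longrightarrow> D x \<in> SV" using lin by (simp add: is_linear_def)
  have sm: "\<And>c x. x \<in> SV \<Longrightarrow> D (sv_smult c x) = sv_smult c (D x)" using lin by (simp add: is_linear_def)
  have der: "\<And>q x y. x \<in> SV \<Longrightarrow> y \<in> SV \<Longrightarrow> homog q x \<Longrightarrow> D (br x y) = sv_add (br (D x) y) (br x (D y))"
    using assms by (simp add: hom_derivation_def sv_smult_def)
  have hL: "\<And>m k. snd (D (Lb m)) k = 0"
  proof -
    fix m k
    have "homog False (D (Lb m))" using assms unfolding hom_derivation_def by (metis Lb_SV homL)
    thus "snd (D (Lb m)) k = 0" by (simp add: homog_def)
  qed
  have hG: "\<And>m k. fst (D (Gb m)) k = 0"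
  proof -
    fix m k
    have "homog True (D (Gb m))" using assms unfolding hom_derivation_def by (metis Gb_SV homG)
    thus "fst (D (Gb m)) k = 0" by (simp add: homog_def)
  qed
  have e1: "D (br (Lb 0) (Lb 1)) = sv_add (br (D (Lb 0)) (Lb 1)) (br (Lb 0) (D (Lb 1)))"
    by (rule der[where q=False]) auto
  have e1': "fst (D (br (Lb 0) (Lb 1))) 1 = fst (sv_add (br (D (Lb 0)) (Lb 1)) (br (Lb 0) (D (Lb 1)))) 1"
    using e1 by simp
  hence u0: "fst (D (Lb 0)) 0 = 0"
    by (simp only: br_LL sm[OF Lb_SV]) (simp add: br_Lr br_Ll SVD sv_add_def sv_smult_def)
  have e2: "D (br (Gb 0) (Gb 0)) = sv_add (br (D (Gb 0)) (Gb 0)) (br (Gb 0) (D (Gb 0)))"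
    by (rule der[where q=True]) auto
  have e2': "fst (D (br (Gb 0) (Gb 0))) 0 = fst (sv_add (br (D (Gb 0)) (Gb 0)) (br (Gb 0) (D (Gb 0)))) 0"
    using e2 by simp
  hence t0: "snd (D (Gb 0)) 0 = 0"
    using u0 by (simp only: br_GG sm[OF Lb_SV]) (simp add: br_Gr br_Gl SVD sv_add_def sv_smult_def)
  have e3: "D (br (Gb 1) (Gb 0)) = sv_add (br (D (Gb 1)) (Gb 0)) (br (Gb 1) (D (Gb 0)))"
    by (rule der[where q=True]) auto
  have e3': "fst (D (br (Gb 1) (Gb 0))) 1 = fst (sv_add (br (D (Gb 1)) (Gb 0)) (br (Gb 1) (D (Gb 0)))) 1"
    using e3 by simp
  thus ?thesis
    using t0 by (simp only: br_GG sm[OF Lb_SV]) (simp add: br_Gr br_Gl SVD sv_add_def sv_smult_def)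
qed

lemma aux: assumes "2*a + r = s" "3*a = 4*s + r" shows "r = -(s::complex)"
proof -
  have r: "r = s - 2*a" using assms(1) by (simp add: algebra_simps)
  have "5*a = 5*s" using assms(2) unfolding r by (simp add: algebra_simps)
  hence "a = s" by simp
  thus ?thesis using r by simp
qed
lemma aux2: assumes "u + c*s = 0" "r + c*u = c*a" "4*r = - s" "c*c = -1/4" "c \<noteq> 0" shows "a = (0::complex)"
proof -
  have u: "u = - c*s" using assms(1) by (simp add: eq_neg_iff_add_eq_0)
  have "c*a = r + c*(-c*s)" using assms(2) u by simp
  also have "\<dots> = r - (c*c)*s" by (simp add: algebra_simps)
  also have "\<dots> = r + s/4" using assms(4) by simp
  also have "\<dots> = 0" using assms(3) by (simp add: field_simps)
  finally show ?thesis using assms(5) by simp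
qed

lemma odd_der:
  assumes "hom_derivation True D"
  shows "4 * snd (D (Lb 1)) 1 = - fst (D (Gb 1)) 1"
proof -
  have lin: "is_linear D" using assms by (simp add: hom_derivation_def)
  have SVD: "\<And>x. x \<in> SV \<Longrightarrow> D x \<in> SV" using lin by (simp add: is_linear_def)
  have sm: "\<And>c x. x \<in> SV \<Longrightarrow> D (sv_smult c x) = sv_smult c (D x)" using lin by (simp add: is_linear_def)
  have der: "\<And>q x y. x \<in> SV \<Longrightarrow> y \<in> SV \<Longrightarrow> homog q x \<Longrightarrow> D (br x y) = sv_add (br (D x) y) (sv_smult (if q then -1 else 1) (br x (D y)))"
    using assms by (simp add: hom_derivation_def)
  have hL: "\<And>m k. fst (D (Lb m)) k = 0"
  proof -
    fix m k
    have "\<forall>q. \<forall>x\<in>SV. homog q x \<longrightarrow> homog (q \<noteq> True) (D x)" using assms unfolding hom_derivation_def by blast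
    hence "homog True (D (Lb m))" using Lb_SV homL by fastforce
    thus "fst (D (Lb m)) k = 0" by (simp add: homog_def)
  qed
  have hG: "\<And>m k. snd (D (Gb m)) k = 0"
  proof -
    fix m k
    have "\<forall>q. \<forall>x\<in>SV. homog q x \<longrightarrow> homog (q \<noteq> True) (D x)" using assms unfolding hom_derivation_def by blast
    hence "homog False (D (Gb m))" using Gb_SV homG by fastforce
    thus "snd (D (Gb m)) k = 0" by (simp add: homog_def)
  qed
  have e1: "D (br (Gb 1) (Gb 0)) = sv_add (br (D (Gb 1)) (Gb 0)) (sv_smult (if True then -1 else 1) (br (Gb 1) (D (Gb 0))))"
    by (rule der) auto
  have "snd (D (br (Gb 1) (Gb 0))) 1 = snd (sv_add (br (D (Gb 1)) (Gb 0)) (sv_smult (if True then -1 else 1) (br (Gb 1) (D (Gb 0))))) 1"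
    using e1 by simp
  hence E1: "2 * snd (D (Lb 1)) 1 = fst (D (Gb 1)) 1 / 2 - fst (D (Gb 0)) 0"
    by (simp only: br_GG sm[OF Lb_SV]) (simp add: br_Gr br_Gl SVD sv_add_def sv_smult_def)
  have e2: "D (br (Gb 1) (Gb (-1))) = sv_add (br (D (Gb 1)) (Gb (-1))) (sv_smult (if True then -1 else 1) (br (Gb 1) (D (Gb (-1)))))"
    by (rule der) auto
  have "snd (D (br (Gb 1) (Gb (-1)))) 0 = snd (sv_add (br (D (Gb 1)) (Gb (-1))) (sv_smult (if True then -1 else 1) (br (Gb 1) (D (Gb (-1)))))) 0"
    using e2 by simp
  hence E2: "8 * snd (D (Lb 0)) 0 + 6 * fst (D (Gb (- 1))) (- 1) = 6 * fst (D (Gb 1)) 1"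
    by (simp only: br_GG sm[OF Lb_SV]) (simp add: br_Gr br_Gl SVD sv_add_def sv_smult_def field_simps)
  have e3: "D (br (Lb 0) (Gb 1)) = sv_add (br (D (Lb 0)) (Gb 1)) (sv_smult (if False then -1 else 1) (br (Lb 0) (D (Gb 1))))"
    by (rule der) auto
  have "fst (D (br (Lb 0) (Gb 1))) 1 = fst (sv_add (br (D (Lb 0)) (Gb 1)) (sv_smult (if False then -1 else 1) (br (Lb 0) (D (Gb 1))))) 1"
    using e3 by simp
  hence E3: "snd (D (Lb 0)) 0 = 0"
    by (simp only: br_LG sm[OF Gb_SV]) (simp add: br_Gr br_Ll SVD sv_add_def sv_smult_def)
  have e4: "D (br (Lb 1) (Gb (-1))) = sv_add (br (D (Lb 1)) (Gb (-1))) (sv_smult (if False then -1 else 1) (br (Lb 1) (D (Gb (-1)))))"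
    by (rule der) auto
  have "fst (D (br (Lb 1) (Gb (-1)))) 0 = fst (sv_add (br (D (Lb 1)) (Gb (-1))) (sv_smult (if False then -1 else 1) (br (Lb 1) (D (Gb (-1)))))) 0"
    using e4 by simp
  hence E4: "3/2 * fst (D (Gb 0)) 0 = 2 * snd (D (Lb 1)) 1 + 2 * fst (D (Gb (-1))) (-1)"
    by (simp only: br_LG sm[OF Gb_SV]) (simp add: br_Gr br_Ll SVD sv_add_def sv_smult_def field_simps)
  have A: "2 * fst (D (Gb 0)) 0 + 4 * snd (D (Lb 1)) 1 = fst (D (Gb 1)) 1"
    using E1 by (simp add: field_simps)
  have B: "3 * fst (D (Gb 0)) 0 = 4 * fst (D (Gb 1)) 1 + 4 * snd (D (Lb 1)) 1"
    using E2 E3 E4 by (simp add: field_simps)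
  show ?thesis using aux[OF A B] by simp
qed

theorem lemma4p2:
  fixes \<Delta> :: "sv \<Rightarrow> sv" and a :: complex
  assumes "local_derivation \<Delta>"
    and "\<Delta> (Lb 1) = sv_zero"
    and "\<Delta> (Gb 1) = sv_smult a (Gb 1)"
  shows "\<Delta> (Gb 1) = sv_zero"
proof -
  define c :: complex where "c = \<i> / 2"
  have cc: "c * c = -1/4" by (simp add: c_def field_simps)
  have c0: "c \<noteq> 0" by (simp add: c_def)
  define x where "x = sv_add (Lb 1) (sv_smult c (Gb 1))"
  have xSV: "x \<in> SV" by (simp add: x_def)
  have lin: "is_linear \<Delta>" using assms(1) by (simp add: local_derivation_def)
  have "\<Delta> x = sv_add (\<Delta> (Lb 1)) (sv_smult c (\<Delta> (Gb 1)))"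
    using lin by (simp add: is_linear_def x_def)
  hence Dx: "\<Delta> x = sv_add sv_zero (sv_smult c (sv_smult a (Gb 1)))"
    using assms(2,3) by simp
  obtain D where D: "derivation D" "\<Delta> x = D x"
    using assms(1) xSV by (auto simp: local_derivation_def)
  obtain D0 D1 where H: "hom_derivation False D0" "hom_derivation True D1"
    "\<forall>x\<in>SV. D x = sv_add (D0 x) (D1 x)"
    using D(1) unfolding derivation_def by blast
  have l0: "is_linear D0" "is_linear D1" using H by (auto simp: hom_derivation_def)
  have D0x: "D0 x = sv_add (D0 (Lb 1)) (sv_smult c (D0 (Gb 1)))"
    using l0(1) by (simp add: is_linear_def x_def)
  have D1x: "D1 x = sv_add (D1 (Lb 1)) (sv_smult c (D1 (Gb 1)))"
    using l0(2) by (simp add: is_linear_def x_def)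
  have eq: "sv_add sv_zero (sv_smult c (sv_smult a (Gb 1))) =
     sv_add (sv_add (D0 (Lb 1)) (sv_smult c (D0 (Gb 1)))) (sv_add (D1 (Lb 1)) (sv_smult c (D1 (Gb 1))))"
    using Dx D(2) H(3) xSV D0x D1x by simp
  have hom: "\<And>p D q y. hom_derivation p D \<Longrightarrow> y \<in> SV \<Longrightarrow> homog q y \<Longrightarrow> homog (q \<noteq> p) (D y)"
    by (simp add: hom_derivation_def)
  have h1: "fst (D0 (Gb 1)) 1 = 0" using hom[OF H(1) Gb_SV homG] by (simp add: homog_def)
  have h2: "fst (D1 (Lb 1)) 1 = 0" using hom[OF H(2) Lb_SV homL] by (simp add: homog_def)
  have h3: "snd (D0 (Lb 1)) 1 = 0" using hom[OF H(1) Lb_SV homL] by (simp add: homog_def)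
  have h4: "snd (D1 (Gb 1)) 1 = 0" using hom[OF H(2) Gb_SV homG] by (simp add: homog_def)
  have f1: "fst (D0 (Lb 1)) 1 + c * fst (D1 (Gb 1)) 1 = 0"
    using arg_cong[OF eq, of "\<lambda>z. fst z 1"] h1 h2
    by (simp add: sv_add_def sv_smult_def sv_zero_def Gb_def)
  have f2: "snd (D1 (Lb 1)) 1 + c * snd (D0 (Gb 1)) 1 = c * a"
    using arg_cong[OF eq, of "\<lambda>z. snd z 1"] h3 h4
    by (simp add: sv_add_def sv_smult_def sv_zero_def Gb_def)
  have u: "fst (D0 (Lb 1)) 1 = snd (D0 (Gb 1)) 1" by (rule even_der[OF H(1)])
  have r: "4 * snd (D1 (Lb 1)) 1 = - fst (D1 (Gb 1)) 1" by (rule odd_der[OF H(2)])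
  have "a = 0" by (rule aux2[OF f1 f2[folded u] r cc c0])
  thus ?thesis using assms(3) by (simp add: sv_smult_def sv_zero_def)
qed

end
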